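(* Let $\mathit{VI}$ be a finite set of variables with $\#\mathit{VI}=n$ and $k\in\mathbb{N}$ with $1\le k\le n$. Then the set of meet-irreducible elements of the lattice $\mathit{TSD}_k$ is $\mathrm{MI}(\mathit{TSD}_k)=\{\mathit{SG}\}\cup\mathrm{dAtoms}(\mathit{TSD}_k)\cup M_k$, where $\mathrm{dAtoms}(\mathit{TSD}_k)=\{\mathit{SG}\setminus\{S\}\mid S\in\mathit{SG},\ \#S\le k\}$ and $M_k=\{\,\mathit{SG}\setminus\{U\in\mathit{SG}\mid T\subseteq U\subseteq S\}\mid T,S\in\mathit{SG},\ T\subsetneq S,\ \#T=k\,\}$.
   Context: $\mathit{SG}=\wp(\mathit{VI})\setminus\{\emptyset\}$, $\mathit{SH}=\wp(\mathit{SG})$. $\rho_{\mathit{TSD}_k}(sh)=\{\,S\in\mathit{SG}\mid \forall T\subseteq S:\ \#T<k\implies S=\bigcup\{U\in sh\mid T\subseteq U\subseteq S\}\,\}$ is an upper closure operator on $\mathit{SH}$ and $\mathit{TSD}_k=\rho_{\mathit{TSD}_k}(\mathit{SH})$, a complete lattice ordered by inclusion with meet given by intersection and top $\mathit{SG}$. An element $x$ of a complete lattice $C$ is meet-irreducible if for all $y,z\in C$, $x=y\wedge z$ implies $x=y$ or $x=z$; $\mathrm{MI}(C)$ is the set of such elements. A dual-atom is $x\ne\top$ such that $x\le y<\top$ implies $x=y$; $\mathrm{dAtoms}(C)$ is the set of dual-atoms. *)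

theory Defs
  imports Main
begin

definition SG :: "'a set \<Rightarrow> 'a set set" where
  "SG VI = Pow VI - {{}}"

definition SH :: "'a set \<Rightarrow> 'a set set set" where
  "SH VI = Pow (SG VI)"

definition rho_TSD :: "nat \<Rightarrow> 'a set \<Rightarrow> 'a set set \<Rightarrow> 'a set set" where
  "rho_TSD k VI sh = {S \<in> SG VI. \<forall>T. T \<subseteq> S \<longrightarrow> card T < k \<longrightarrow>
       S = \<Union>{U \<in> sh. T \<subseteq> U \<and> U \<subseteq> S}}"

definition TSD :: "nat \<Rightarrow> 'a set \<Rightarrow> 'a set set set" where
  "TSD k VI = rho_TSD k VI ` SH VI"

definition MI :: "'b set set \<Rightarrow> 'b set set" where
  "MI C = {x \<in> C. \<forall>y\<in>C. \<forall>z\<in>C. x = y \<inter> z \<longrightarrow> x = y \<or> x = z}"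

definition dAtoms :: "'b set set \<Rightarrow> 'b set \<Rightarrow> 'b set set" where
  "dAtoms C tp = {x \<in> C. x \<noteq> tp \<and> (\<forall>y\<in>C. x \<subseteq> y \<and> y \<noteq> tp \<longrightarrow> x = y)}"

definition Mk :: "nat \<Rightarrow> 'a set \<Rightarrow> 'a set set set" where
  "Mk k VI = {SG VI - {U \<in> SG VI. T \<subseteq> U \<and> U \<subseteq> S} | T S.
       T \<in> SG VI \<and> S \<in> SG VI \<and> T \<subset> S \<and> card T = k}"

end

theory Submission imports Defs begin

lemma rho_l3: "S \<subseteq> \<Union>{U \<in> sh. T \<subseteq> U \<and> U \<subseteq> S} \<longleftrightarrow> (\<forall>w\<in>S. \<exists>U\<in>sh. T \<subseteq> U \<and> U \<subseteq> S \<and> w \<in> U)"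
  unfolding subset_eq Union_iff mem_Collect_eq Bex_def by meson
lemma rho_l2: "\<Union>{U \<in> sh. T \<subseteq> U \<and> U \<subseteq> S} \<subseteq> S \<Longrightarrow> (S = \<Union>{U \<in> sh. T \<subseteq> U \<and> U \<subseteq> S}) \<longleftrightarrow> S \<subseteq> \<Union>{U \<in> sh. T \<subseteq> U \<and> U \<subseteq> S}"
  by (rule iffI, simp, rule subset_antisym)
lemma rho_l1: "\<Union>{U \<in> sh. T \<subseteq> U \<and> U \<subseteq> S} \<subseteq> S" by (rule Union_least) simp

lemma rho_iff: "S \<in> rho_TSD k VI sh \<longleftrightarrow> S \<in> SG VI \<and> (\<forall>T. T \<subseteq> S \<longrightarrow> card T < k \<longrightarrow> (\<forall>w\<in>S. \<exists>U\<in>sh. T \<subseteq> U \<and> U \<subseteq> S \<and> w \<in> U))"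
proof -
  have *: "(S = \<Union>{U \<in> sh. T \<subseteq> U \<and> U \<subseteq> S}) \<longleftrightarrow> (\<forall>w\<in>S. \<exists>U\<in>sh. T \<subseteq> U \<and> U \<subseteq> S \<and> w \<in> U)" for T
    by (rule trans[OF rho_l2[OF rho_l1] rho_l3])
  show ?thesis unfolding rho_TSD_def using * by simp
qed

lemma rhoD: "S \<in> rho_TSD k VI sh \<Longrightarrow> T \<subseteq> S \<Longrightarrow> card T < k \<Longrightarrow> w \<in> S \<Longrightarrow> \<exists>U\<in>sh. T \<subseteq> U \<and> U \<subseteq> S \<and> w \<in> U"
  unfolding rho_iff by blast
lemma rho_sub_SG: "rho_TSD k VI sh \<subseteq> SG VI"
  by (intro subsetI) (simp add: rho_iff)
lemma rhoI: "S \<in> SG VI \<Longrightarrow> (\<And>T w. T \<subseteq> S \<Longrightarrow> card T < k \<Longrightarrow> w \<in> S \<Longrightarrow> \<exists>U\<in>sh. T \<subseteq> U \<and> U \<subseteq> S \<and> w \<in> U) \<Longrightarrow> S \<in> rho_TSD k VI sh"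
  unfolding rho_iff by blast

lemma rho_ext: "sh \<subseteq> SG VI \<Longrightarrow> sh \<subseteq> rho_TSD k VI sh"
proof
  fix S assume a: "sh \<subseteq> SG VI" "S \<in> sh"
  show "S \<in> rho_TSD k VI sh"
  proof (rule rhoI)
    show "S \<in> SG VI" using a by blast
    fix T w assume "T \<subseteq> S" "card T < k" "w \<in> S"
    then show "\<exists>U\<in>sh. T \<subseteq> U \<and> U \<subseteq> S \<and> w \<in> U" using a(2) by blast
  qed
qed

lemma rho_mono: "a \<subseteq> b \<Longrightarrow> rho_TSD k VI a \<subseteq> rho_TSD k VI b"
proof
  fix S assume ab: "a \<subseteq> b" and S: "S \<in> rho_TSD k VI a"
  show "S \<in> rho_TSD k VI b"
  proof (rule rhoI)
    show "S \<in> SG VI" using S rho_sub_SG by blast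
    fix T w assume T: "T \<subseteq> S" "card T < k" "w \<in> S"
    obtain U where "U \<in> a" "T \<subseteq> U \<and> U \<subseteq> S \<and> w \<in> U" using rhoD[OF S T] by blast
    then show "\<exists>U\<in>b. T \<subseteq> U \<and> U \<subseteq> S \<and> w \<in> U" using ab by blast
  qed
qed

lemma rho_idem: "rho_TSD k VI (rho_TSD k VI sh) \<subseteq> rho_TSD k VI sh"
proof
  fix S assume S: "S \<in> rho_TSD k VI (rho_TSD k VI sh)"
  show "S \<in> rho_TSD k VI sh"
  proof (rule rhoI)
    show "S \<in> SG VI" using S rho_sub_SG by blast
    fix T w assume T: "T \<subseteq> S" "card T < k" "w \<in> S"
    obtain U where U: "U \<in> rho_TSD k VI sh" "T \<subseteq> U" "U \<subseteq> S" "w \<in> U"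
      using rhoD[OF S T] by blast
    obtain V where "V \<in> sh" "T \<subseteq> V" "V \<subseteq> U" "w \<in> V" using rhoD[OF U(1) U(2) T(2) U(4)] by blast
    then show "\<exists>U\<in>sh. T \<subseteq> U \<and> U \<subseteq> S \<and> w \<in> U" using U(3) by (meson order_trans)
  qed
qed

definition cl :: "nat \<Rightarrow> 'a set \<Rightarrow> 'a set set \<Rightarrow> bool" where
  "cl k VI x \<longleftrightarrow> x \<subseteq> SG VI \<and> rho_TSD k VI x \<subseteq> x"

lemma TSD_iff: "x \<in> TSD k VI \<longleftrightarrow> cl k VI x"
proof
  assume "x \<in> TSD k VI"
  then obtain sh where "x = rho_TSD k VI sh" unfolding TSD_def by blast
  then show "cl k VI x" unfolding cl_def using rho_idem rho_sub_SG by blast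
next
  assume c: "cl k VI x"
  then have "rho_TSD k VI x = x" unfolding cl_def using rho_ext by blast
  moreover have "x \<in> SH VI" using c unfolding cl_def SH_def by blast
  ultimately show "x \<in> TSD k VI" unfolding TSD_def by (metis image_eqI)
qed

lemma cl_SG: "cl k VI (SG VI)"
  unfolding cl_def using rho_sub_SG by blast

lemma cl_inter: "cl k VI y \<Longrightarrow> cl k VI z \<Longrightarrow> cl k VI (y \<inter> z)"
  unfolding cl_def using rho_mono[of "y \<inter> z" y k VI] rho_mono[of "y \<inter> z" z k VI] by blast


lemma SG_fin: "finite VI \<Longrightarrow> S \<in> SG VI \<Longrightarrow> finite S \<and> S \<noteq> {} \<and> S \<subseteq> VI"
  unfolding SG_def using finite_subset by auto

lemma cl_atom:
  assumes fin: "finite VI" and S: "S \<in> SG VI" "card S \<le> k"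
  shows "cl k VI (SG VI - {S})"
  unfolding cl_def
proof (intro conjI subsetI)
  fix R assume R: "R \<in> rho_TSD k VI (SG VI - {S})"
  have "R \<in> SG VI" using R rho_sub_SG by blast
  moreover have "R \<noteq> S"
  proof
    assume RS: "R = S"
    have fS: "finite S" "S \<noteq> {}" using SG_fin[OF fin S(1)] by auto
    then obtain w where w: "w \<in> S" by blast
    have "card (S - {w}) < k" using fS w S(2)
      by (metis card_Diff1_less order_less_le_trans)
    then obtain U where U: "U \<in> SG VI - {S}" "S - {w} \<subseteq> U" "U \<subseteq> S" "w \<in> U"
      using rhoD[of S k VI "SG VI - {S}" "S - {w}" w] R RS w by blast
    then have "U = S" by blast
    then show False using U by blast
  qed
  ultimately show "R \<in> SG VI - {S}" by blast
qed auto

lemma witness: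
  assumes fin: "finite VI" and c: "cl k VI x" and S: "S \<in> SG VI" "S \<notin> x"
  shows "\<exists>T0. T0 \<subseteq> S \<and> T0 \<noteq> {} \<and> card T0 \<le> k \<and> (\<forall>U\<in>SG VI. T0 \<subseteq> U \<and> U \<subseteq> S \<longrightarrow> U \<notin> x)"
proof -
  have "S \<notin> rho_TSD k VI x" using c S unfolding cl_def by blast
  then obtain T w where T: "T \<subseteq> S" "card T < k" "w \<in> S" and nu: "\<not> (\<exists>U\<in>x. T \<subseteq> U \<and> U \<subseteq> S \<and> w \<in> U)"
    using rhoI[OF S(1), of k x] by blast
  have fT: "finite T" using T(1) SG_fin[OF fin S(1)] finite_subset by blast
  show ?thesis
  proof (intro exI conjI ballI impI)
    show "insert w T \<subseteq> S" using T by blast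
    show "insert w T \<noteq> {}" by blast
    show "card (insert w T) \<le> k" using fT T(2)
      by (metis Suc_leI card_insert_if le_SucI less_imp_le_nat)
    fix U assume "U \<in> SG VI" "insert w T \<subseteq> U \<and> U \<subseteq> S"
    then show "U \<notin> x" using nu by blast
  qed
qed

lemma exists_k_sub:
  assumes "finite S" "T0 \<subseteq> S" "card T0 \<le> k" "k \<le> card S"
  shows "\<exists>T1. T0 \<subseteq> T1 \<and> T1 \<subseteq> S \<and> card T1 = k"
proof -
  have fT0: "finite T0" using assms finite_subset by blast
  have "k - card T0 \<le> card (S - T0)" using assms card_Diff_subset[OF fT0 assms(2)] by linarith
  then obtain A where A: "A \<subseteq> S - T0" "card A = k - card T0" "finite A"
    by (meson obtain_subset_with_card_n)
  have "card (T0 \<union> A) = card T0 + card A"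
    using A fT0 by (subst card_Un_disjoint) auto
  then show ?thesis using A assms by (intro exI[of _ "T0 \<union> A"]) auto
qed

lemma cl_Mk:
  assumes fin: "finite VI" and T: "T \<in> SG VI" "S \<in> SG VI" "T \<subset> S" "card T = k"
  shows "cl k VI (SG VI - {U \<in> SG VI. T \<subseteq> U \<and> U \<subseteq> S})"
  unfolding cl_def
proof (intro conjI subsetI)
  fix R assume R: "R \<in> rho_TSD k VI (SG VI - {U \<in> SG VI. T \<subseteq> U \<and> U \<subseteq> S})"
  have RSG: "R \<in> SG VI" using R rho_sub_SG by blast
  moreover have "\<not> (T \<subseteq> R \<and> R \<subseteq> S)"
  proof
    assume TR: "T \<subseteq> R \<and> R \<subseteq> S"
    have fT: "finite T" "T \<noteq> {}" using SG_fin[OF fin T(1)] by auto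
    then obtain t where t: "t \<in> T" by blast
    have "card (T - {t}) < k" using fT t T(4)
      by (metis card_Diff1_less)
    then obtain U where U: "U \<in> SG VI - {U \<in> SG VI. T \<subseteq> U \<and> U \<subseteq> S}" "T - {t} \<subseteq> U" "U \<subseteq> R" "t \<in> U"
      using rhoD[OF R, of "T - {t}" t] t TR by blast
    then show False using TR by blast
  qed
  ultimately show "R \<in> SG VI - {U \<in> SG VI. T \<subseteq> U \<and> U \<subseteq> S}" by blast
qed auto

lemma Mk_key:
  assumes fin: "finite VI" and T: "T \<in> SG VI" "S \<in> SG VI" "T \<subset> S" "card T = k"
    and y: "cl k VI y" "SG VI - {U \<in> SG VI. T \<subseteq> U \<and> U \<subseteq> S} \<subseteq> y"
    "y \<noteq> SG VI - {U \<in> SG VI. T \<subseteq> U \<and> U \<subseteq> S}"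
  shows "S \<in> y"
proof (rule ccontr)
  assume Sy: "S \<notin> y"
  obtain R where R: "R \<in> y" "T \<subseteq> R" "R \<subseteq> S"
    using y unfolding cl_def by blast
  obtain T0 where T0: "T0 \<subseteq> S" "T0 \<noteq> {}" "card T0 \<le> k" "\<forall>U\<in>SG VI. T0 \<subseteq> U \<and> U \<subseteq> S \<longrightarrow> U \<notin> y"
    using witness[OF fin y(1) T(2) Sy] by blast
  have T0SG: "T0 \<in> SG VI" using T0 SG_fin[OF fin T(2)] unfolding SG_def by auto
  show False
  proof (cases "T \<subseteq> T0")
    case True
    have "finite T0" using T0SG SG_fin[OF fin] by blast
    then have "T0 = T" using True T0(3) T(4) by (metis card_seteq)
    then show False using T0(4) R y(1) unfolding cl_def by blast
  next
    case False
    then have "T0 \<in> y" using y(2) T0SG by blast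
    then show False using T0(4) T0SG T0(1) by blast
  qed
qed


lemma Inter_in:
  assumes cl: "\<forall>y\<in>C. \<forall>z\<in>C. y \<inter> z \<in> C" and F: "finite F" "F \<noteq> {}" "F \<subseteq> C"
  shows "\<Inter>F \<in> C"
  using F
proof (induction F rule: finite_ne_induct)
  case (singleton a) then show ?case by simp
next
  case (insert a F) then show ?case using cl by simp
qed

lemma fin_inter_MI:
  assumes cl: "\<forall>y\<in>C. \<forall>z\<in>C. y \<inter> z \<in> C" and F: "finite F" "F \<noteq> {}" "F \<subseteq> C"
    and x: "x \<in> MI C" "x = \<Inter>F"
  shows "x \<in> F"
  using F x(2)
proof (induction F rule: finite_ne_induct)
  case (singleton a) then show ?case by simp
next
  case (insert a F)
  have "\<Inter>F \<in> C" using Inter_in[OF cl insert(1,2)] insert(5) by blast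
  moreover have "a \<in> C" using insert(5) by blast
  moreover have "x = a \<inter> \<Inter>F" using insert(6) by simp
  ultimately have "x = a \<or> x = \<Inter>F" using x(1) unfolding MI_def by blast
  then show ?case using insert by blast
qed

definition Dset :: "'a set \<Rightarrow> nat \<Rightarrow> 'a set set set" where
  "Dset VI k = {SG VI - {S} | S. S \<in> SG VI \<and> card S \<le> k}"

lemma memD: "S \<in> SG VI \<Longrightarrow> card S \<le> k \<Longrightarrow> SG VI - {S} \<in> Dset VI k"
  unfolding Dset_def by (rule CollectI, rule exI[of _ S]) simp
lemma memMk: "T \<in> SG VI \<Longrightarrow> S \<in> SG VI \<Longrightarrow> T \<subset> S \<Longrightarrow> card T = k \<Longrightarrow> SG VI - {U \<in> SG VI. T \<subseteq> U \<and> U \<subseteq> S} \<in> Mk k VI"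
  unfolding Mk_def by (rule CollectI, rule exI[of _ T], rule exI[of _ S]) simp
lemma MkE: assumes "x \<in> Mk k VI" obtains T S where "T \<in> SG VI" "S \<in> SG VI" "T \<subset> S" "card T = k" "x = SG VI - {U \<in> SG VI. T \<subseteq> U \<and> U \<subseteq> S}"
  using assms unfolding Mk_def by (elim CollectE exE conjE) (rule that, assumption+)
lemma DE: assumes "x \<in> Dset VI k" obtains S where "S \<in> SG VI" "card S \<le> k" "x = SG VI - {S}"
  using assms unfolding Dset_def by (elim CollectE exE conjE) (rule that, assumption+)

lemma basic:
  assumes fin: "finite VI" and k: "1 \<le> k" and c: "cl k VI x" and S: "S \<in> SG VI" "S \<notin> x"
  shows "\<exists>B. (B \<in> Dset VI k \<or> B \<in> Mk k VI) \<and> x \<subseteq> B \<and> S \<notin> B"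
proof (cases "card S \<le> k")
  case True
  have "SG VI - {S} \<in> Dset VI k" using memD[OF S(1) True] .
  moreover have "x \<subseteq> SG VI - {S}" using S(2) c unfolding cl_def by blast
  ultimately have "(SG VI - {S} \<in> Dset VI k \<or> SG VI - {S} \<in> Mk k VI) \<and> x \<subseteq> SG VI - {S} \<and> S \<notin> SG VI - {S}"
    by simp
  then show ?thesis by (rule exI)
next
  case False
  obtain T0 where T0: "T0 \<subseteq> S" "T0 \<noteq> {}" "card T0 \<le> k" "\<forall>U\<in>SG VI. T0 \<subseteq> U \<and> U \<subseteq> S \<longrightarrow> U \<notin> x"
    using witness[OF fin c S] by blast
  have fS: "finite S" "S \<subseteq> VI" using SG_fin[OF fin S(1)] by auto
  obtain T1 where T1: "T0 \<subseteq> T1" "T1 \<subseteq> S" "card T1 = k"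
    using exists_k_sub[OF fS(1) T0(1) T0(3)] False by auto
  have T1SG: "T1 \<in> SG VI" using T1 fS k unfolding SG_def by auto
  have T1S: "T1 \<subset> S" using T1 False by auto
  let ?B = "SG VI - {U \<in> SG VI. T1 \<subseteq> U \<and> U \<subseteq> S}"
  have "?B \<in> Mk k VI" using memMk[OF T1SG S(1) T1S T1(3)] .
  moreover have "x \<subseteq> ?B"
  proof
    fix U assume U: "U \<in> x"
    have USG: "U \<in> SG VI" using U c unfolding cl_def by blast
    have "\<not> (T1 \<subseteq> U \<and> U \<subseteq> S)"
    proof
      assume "T1 \<subseteq> U \<and> U \<subseteq> S"
      then have "T0 \<subseteq> U \<and> U \<subseteq> S" using T1(1) by blast
      then show False using T0(4) USG U by blast
    qed
    then show "U \<in> ?B" using USG by simp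
  qed
  moreover have "S \<notin> ?B" using S(1) T1(2) by simp
  ultimately have "(?B \<in> Dset VI k \<or> ?B \<in> Mk k VI) \<and> x \<subseteq> ?B \<and> S \<notin> ?B"
    by simp
  then show ?thesis by (rule exI)
qed


theorem theorem4p3:
  fixes VI :: "'a set" and n k :: nat
  assumes "finite VI" and "card VI = n" and "1 \<le> k" and "k \<le> n"
  shows "MI (TSD k VI) = {SG VI} \<union> dAtoms (TSD k VI) (SG VI) \<union> Mk k VI
     \<and> dAtoms (TSD k VI) (SG VI) = {SG VI - {S} | S. S \<in> SG VI \<and> card S \<le> k}"
proof -
  note fin = assms(1) and k = assms(3)
  define C where "C = TSD k VI"
  have Ccl: "y \<in> C \<longleftrightarrow> cl k VI y" for y unfolding C_def by (rule TSD_iff)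
  have Csub: "y \<in> C \<Longrightarrow> y \<subseteq> SG VI" for y using Ccl unfolding cl_def by blast
  have SGC: "SG VI \<in> C" using Ccl cl_SG by blast
  have DC: "Dset VI k \<subseteq> C"
  proof
    fix x assume "x \<in> Dset VI k"
    then obtain S where "S \<in> SG VI" "card S \<le> k" "x = SG VI - {S}" by (rule DE)
    then show "x \<in> C" using Ccl cl_atom[OF fin] by simp
  qed
  have MkC: "Mk k VI \<subseteq> C"
  proof
    fix x assume "x \<in> Mk k VI"
    then obtain T S where "T \<in> SG VI" "S \<in> SG VI" "T \<subset> S" "card T = k"
      "x = SG VI - {U \<in> SG VI. T \<subseteq> U \<and> U \<subseteq> S}" by (rule MkE)
    then show "x \<in> C" using Ccl cl_Mk[OF fin] by simp
  qed
  have interC: "\<forall>y\<in>C. \<forall>z\<in>C. y \<inter> z \<in> C" using Ccl cl_inter by blast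
  have dA: "dAtoms C (SG VI) = Dset VI k"
  proof
    show "dAtoms C (SG VI) \<subseteq> Dset VI k"
    proof
      fix x assume x: "x \<in> dAtoms C (SG VI)"
      then have xC: "x \<in> C" and xne: "x \<noteq> SG VI" and mx: "\<forall>y\<in>C. x \<subseteq> y \<and> y \<noteq> SG VI \<longrightarrow> x = y"
        unfolding dAtoms_def by auto
      obtain S where S: "S \<in> SG VI" "S \<notin> x" using Csub[OF xC] xne by blast
      obtain T0 where T0: "T0 \<subseteq> S" "T0 \<noteq> {}" "card T0 \<le> k" "\<forall>U\<in>SG VI. T0 \<subseteq> U \<and> U \<subseteq> S \<longrightarrow> U \<notin> x"
        using witness[OF fin Ccl[THEN iffD1, OF xC] S] by blast
      have T0SG: "T0 \<in> SG VI" using T0 SG_fin[OF fin S(1)] unfolding SG_def by auto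
      have T0x: "T0 \<notin> x" using T0 T0SG by blast
      have yD: "SG VI - {T0} \<in> Dset VI k" using memD[OF T0SG T0(3)] .
      have yC: "SG VI - {T0} \<in> C" using yD DC by blast
      have "x \<subseteq> SG VI - {T0}" using Csub[OF xC] T0x by blast
      moreover have "SG VI - {T0} \<noteq> SG VI" using T0SG by blast
      ultimately have "x = SG VI - {T0}" using mx yC by blast
      then show "x \<in> Dset VI k" using yD by simp
    qed
  next
    show "Dset VI k \<subseteq> dAtoms C (SG VI)"
    proof
      fix x assume xD: "x \<in> Dset VI k"
      then obtain S where S: "S \<in> SG VI" "x = SG VI - {S}" by (rule DE)
      have "x \<in> C" using xD DC by blast
      moreover have "\<forall>y\<in>C. x \<subseteq> y \<and> y \<noteq> SG VI \<longrightarrow> x = y"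
      proof (intro ballI impI)
        fix y assume "y \<in> C" "x \<subseteq> y \<and> y \<noteq> SG VI"
        then show "x = y" using Csub[of y] S by blast
      qed
      moreover have "x \<noteq> SG VI" using S by blast
      ultimately show "x \<in> dAtoms C (SG VI)" unfolding dAtoms_def by simp
    qed
  qed
  have MI1: "{SG VI} \<union> Dset VI k \<union> Mk k VI \<subseteq> MI C"
  proof
    fix x assume "x \<in> {SG VI} \<union> Dset VI k \<union> Mk k VI"
    then consider "x = SG VI" | "x \<in> Dset VI k" | "x \<in> Mk k VI" by blast
    then show "x \<in> MI C"
    proof cases
      case 1
      have "\<forall>y\<in>C. \<forall>z\<in>C. x = y \<inter> z \<longrightarrow> x = y \<or> x = z"
      proof (intro ballI impI)
        fix y z assume "y \<in> C" "z \<in> C" "x = y \<inter> z"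
        then show "x = y \<or> x = z" using Csub[of y] Csub[of z] 1 by blast
      qed
      then show ?thesis unfolding MI_def using SGC 1 by simp
    next
      case 2
      then have xd: "x \<in> dAtoms C (SG VI)" using dA by simp
      then have xC: "x \<in> C" and xne: "x \<noteq> SG VI" and mx: "\<forall>y\<in>C. x \<subseteq> y \<and> y \<noteq> SG VI \<longrightarrow> x = y"
        unfolding dAtoms_def by auto
      have "\<forall>y\<in>C. \<forall>z\<in>C. x = y \<inter> z \<longrightarrow> x = y \<or> x = z"
      proof (intro ballI impI)
        fix y z assume yz: "y \<in> C" "z \<in> C" "x = y \<inter> z"
        show "x = y \<or> x = z"
        proof (cases "y = SG VI")
          case True
          then show ?thesis using yz Csub[of z] by blast
        next
          case False
          then show ?thesis using mx yz by blast
        qed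
      qed
      then show ?thesis unfolding MI_def using xC by simp
    next
      case 3
      then obtain T S where TS: "T \<in> SG VI" "S \<in> SG VI" "T \<subset> S" "card T = k"
        and xe: "x = SG VI - {U \<in> SG VI. T \<subseteq> U \<and> U \<subseteq> S}" by (rule MkE)
      have xC: "x \<in> C" using 3 MkC by blast
      have "\<forall>y\<in>C. \<forall>z\<in>C. x = y \<inter> z \<longrightarrow> x = y \<or> x = z"
      proof (intro ballI impI)
        fix y z assume yz: "y \<in> C" "z \<in> C" "x = y \<inter> z"
        show "x = y \<or> x = z"
        proof (rule ccontr)
          assume ne: "\<not> (x = y \<or> x = z)"
          have "x \<subseteq> y" "x \<subseteq> z" using yz(3) by auto
          then have "S \<in> y" "S \<in> z"
            using Mk_key[OF fin TS, of y] Mk_key[OF fin TS, of z] yz(1,2) Ccl xe ne by auto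
          then have "S \<in> x" using yz(3) by simp
          moreover have "S \<notin> x" using xe TS(2,3) by auto
          ultimately show False by contradiction
        qed
      qed
      then show ?thesis unfolding MI_def using xC by simp
    qed
  qed
  have MI2: "MI C \<subseteq> {SG VI} \<union> Dset VI k \<union> Mk k VI"
  proof
    fix x assume xM: "x \<in> MI C"
    then have xC: "x \<in> C" unfolding MI_def by blast
    show "x \<in> {SG VI} \<union> Dset VI k \<union> Mk k VI"
    proof (cases "x = SG VI")
      case True then show ?thesis by blast
    next
      case False
      define N where "N = SG VI - x"
      have Nne: "N \<noteq> {}" using False Csub[OF xC] unfolding N_def by blast
      have finSG: "finite (SG VI)" using fin unfolding SG_def by simp
      have finN: "finite N" using finSG unfolding N_def by simp
      define P where "P = (\<lambda>S B. (B \<in> Dset VI k \<or> B \<in> Mk k VI) \<and> x \<subseteq> B \<and> S \<notin> B)"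
      have ex: "\<exists>B. P S B" if "S \<in> N" for S
        using basic[OF fin k Ccl[THEN iffD1, OF xC], of S] that unfolding N_def P_def by blast
      define f where "f = (\<lambda>S. SOME B. P S B)"
      have fP: "P S (f S)" if "S \<in> N" for S
        unfolding f_def using someI_ex[OF ex[OF that]] .
      have F1: "finite (f ` N)" using finN by simp
      have F2: "f ` N \<noteq> {}" using Nne by simp
      have F3: "f ` N \<subseteq> C"
      proof
        fix B assume "B \<in> f ` N"
        then obtain S where "S \<in> N" "B = f S" by blast
        then have "B \<in> Dset VI k \<or> B \<in> Mk k VI" using fP unfolding P_def by blast
        then show "B \<in> C" using DC MkC by blast
      qed
      have Bsub: "B \<subseteq> SG VI" if "B \<in> f ` N" for B using F3 Csub that by blast
      have "x = \<Inter>(f ` N)"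
      proof
        show "x \<subseteq> \<Inter>(f ` N)" using fP unfolding P_def by blast
        show "\<Inter>(f ` N) \<subseteq> x"
        proof
          fix R assume R: "R \<in> \<Inter>(f ` N)"
          obtain S0 where "S0 \<in> N" using Nne by blast
          then have "R \<in> SG VI" using R Bsub by blast
          show "R \<in> x"
          proof (rule ccontr)
            assume "R \<notin> x"
            then have RN: "R \<in> N" using \<open>R \<in> SG VI\<close> unfolding N_def by blast
            then have "R \<notin> f R" using fP unfolding P_def by blast
            moreover have "R \<in> f R" using R RN by blast
            ultimately show False by contradiction
          qed
        qed
      qed
      then have "x \<in> f ` N" using fin_inter_MI[OF interC F1 F2 F3 xM] by blast
      then obtain S where "S \<in> N" "x = f S" by blast
      then show ?thesis using fP unfolding P_def by blast
    qed
  qed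
  have "MI C = {SG VI} \<union> dAtoms C (SG VI) \<union> Mk k VI"
    using MI1 MI2 dA by (intro subset_antisym) simp_all
  then show ?thesis using dA unfolding C_def Dset_def by simp
qed

end
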